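(* For every integer $d\ge2$, the subgroup $V_{[0,1/d)}$ is not co-amenable in $V_d$, and $T_{[0,1/d)}$ is not co-amenable in $T_d$. In particular the quasi-regular representations $\ell^2(V_d/V_{[0,1/d)})$ of $V_d$ and $\ell^2(T_d/T_{[0,1/d)})$ of $T_d$ are non-amenable.
   Context: $V_d$ is the Higman–Thompson group (piecewise affine bijections of $[0,1)$ with finitely many $d$-adic breakpoints and slopes powers of $d$), $T_d\le V_d$ the subgroup of elements inducing homeomorphisms of the circle $[0,1]/(0\sim1)$. $V_{[0,1/d)}$ (resp. $T_{[0,1/d)}$) denotes the subgroup of elements of $V_d$ (resp. $T_d$) acting as the identity on $[0,1/d)$. A subgroup $H\le G$ is co-amenable if there is a $G$-invariant mean on $\ell^\infty(G/H)$. *)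

theory Defs
  imports "HOL-Analysis.Analysis" "HOL-Algebra.Left_Coset"
begin

definition dadic :: "nat \<Rightarrow> real \<Rightarrow> bool" where
  "dadic d x \<longleftrightarrow> (\<exists>(a::int) (n::nat). x = of_int a / (real d) ^ n)"

text \<open>Higman--Thompson group V_d: piecewise affine (right-continuous pieces) bijections
  of [0,1) with finitely many d-adic breakpoints and slopes integer powers of d.
  Elements are represented as functions on the reals that are the identity outside [0,1),
  so that the group law is function composition.\<close>
definition HT_V :: "nat \<Rightarrow> (real \<Rightarrow> real) set" where
  "HT_V d = {f. bij_betw f {0..<1} {0..<1} \<and> (\<forall>x. x \<notin> {0..<1} \<longrightarrow> f x = x) \<and>
     (\<exists>(n::nat) (p::nat \<Rightarrow> real). p 0 = 0 \<and> p n = 1 \<and>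
        (\<forall>i\<le>n. dadic d (p i)) \<and>
        (\<forall>i<n. p i < p (Suc i) \<and>
           (\<exists>(k::int) (b::real). \<forall>t\<in>{p i..<p (Suc i)}. f t = real d powi k * t + b)))}"

text \<open>T_d: elements of V_d inducing a homeomorphism of the circle [0,1]/(0~1),
  realised as the unit circle in the complex plane via t \<mapsto> cis(2 pi t).\<close>
definition HT_T :: "nat \<Rightarrow> (real \<Rightarrow> real) set" where
  "HT_T d = {f \<in> HT_V d. \<exists>\<phi> \<psi>. homeomorphism (sphere (0::complex) 1) (sphere 0 1) \<phi> \<psi> \<and>
       (\<forall>t\<in>{0..<1}. \<phi> (cis (2 * pi * t)) = cis (2 * pi * f t))}"

definition comp_grp :: "(real \<Rightarrow> real) set \<Rightarrow> (real \<Rightarrow> real) monoid" where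
  "comp_grp S = \<lparr>carrier = S, mult = (\<circ>), one = id\<rparr>"

definition fix_init :: "nat \<Rightarrow> (real \<Rightarrow> real) set \<Rightarrow> (real \<Rightarrow> real) set" where
  "fix_init d S = {f \<in> S. \<forall>x\<in>{0..<1 / real d}. f x = x}"

definition mean_on :: "'b set \<Rightarrow> (('b \<Rightarrow> real) \<Rightarrow> real) \<Rightarrow> bool" where
  "mean_on X m \<longleftrightarrow>
     (\<forall>\<phi> \<psi> a b. bounded (\<phi> ` X) \<and> bounded (\<psi> ` X) \<longrightarrow>
         m (\<lambda>x. a * \<phi> x + b * \<psi> x) = a * m \<phi> + b * m \<psi>) \<and>
     (\<forall>\<phi>. bounded (\<phi> ` X) \<and> (\<forall>x\<in>X. 0 \<le> \<phi> x) \<longrightarrow> 0 \<le> m \<phi>) \<and>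
     m (\<lambda>_. 1) = 1"

definition co_amenable :: "('a, 'c) monoid_scheme \<Rightarrow> 'a set \<Rightarrow> bool" where
  "co_amenable G H \<longleftrightarrow> (\<exists>m. mean_on (lcosets\<^bsub>G\<^esub> H) m \<and>
     (\<forall>g\<in>carrier G. \<forall>\<phi>. bounded (\<phi> ` (lcosets\<^bsub>G\<^esub> H)) \<longrightarrow>
         m (\<lambda>C. \<phi> (g <#\<^bsub>G\<^esub> C)) = m \<phi>))"

end

theory Submission
  imports Defs
begin


definition ev :: "(real \<Rightarrow> real) set \<Rightarrow> real" where
  "ev C = (SOME f. f \<in> C) 0"

lemma lcoset_comp: "a <#\<^bsub>comp_grp S\<^esub> H = (\<lambda>h. a \<circ> h) ` H"
  unfolding l_coset_def comp_grp_def by auto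

lemma lcosets_comp: "lcosets\<^bsub>comp_grp S\<^esub> H = (\<lambda>a. (\<lambda>h. a \<circ> h) ` H) ` S"
  unfolding LCOSETS_def lcoset_comp by (auto simp: comp_grp_def)

lemma ev_coset:
  assumes "id \<in> H" "\<forall>h\<in>H. h 0 = 0"
  shows "ev ((\<lambda>h. a \<circ> h) ` H) = a 0"
proof -
  have "(SOME f. f \<in> (\<lambda>h. a \<circ> h) ` H) \<in> (\<lambda>h. a \<circ> h) ` H"
    using assms(1) by (metis imageI someI_ex)
  then show ?thesis using assms(2) unfolding ev_def by auto
qed

lemma mean_cong:
  assumes m: "mean_on X m" and bp: "\<forall>x\<in>X. \<bar>\<phi> x\<bar> \<le> K" and bq: "\<forall>x\<in>X. \<bar>\<psi> x\<bar> \<le> K"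
    and eq: "\<forall>x\<in>X. \<phi> x = \<psi> x"
  shows "m \<phi> = m \<psi>"
proof -
  have b1: "bounded (\<phi> ` X)" using bp unfolding bounded_iff by auto
  have b2: "bounded (\<psi> ` X)" using bq unfolding bounded_iff by auto
  have b0: "bounded ((\<lambda>x. 1 * \<phi> x + (-1) * \<psi> x) ` X)"
    using eq unfolding bounded_iff by (intro exI[of _ 0]) auto
  have b0': "bounded ((\<lambda>x. 1 * \<psi> x + (-1) * \<phi> x) ` X)"
    using eq unfolding bounded_iff by (intro exI[of _ 0]) auto
  have l1: "m (\<lambda>x. 1 * \<phi> x + (-1) * \<psi> x) = 1 * m \<phi> + (-1) * m \<psi>"
    using m b1 b2 unfolding mean_on_def by blast
  have l2: "m (\<lambda>x. 1 * \<psi> x + (-1) * \<phi> x) = 1 * m \<psi> + (-1) * m \<phi>"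
    using m b1 b2 unfolding mean_on_def by blast
  have p1: "0 \<le> m (\<lambda>x. 1 * \<phi> x + (-1) * \<psi> x)"
    using m b0 eq unfolding mean_on_def by auto
  have p2: "0 \<le> m (\<lambda>x. 1 * \<psi> x + (-1) * \<phi> x)"
    using m b0' eq unfolding mean_on_def by auto
  show ?thesis using l1 l2 p1 p2 by linarith
qed

lemma not_coam:
  fixes S :: "(real\<Rightarrow>real) set" and d N :: nat and a b :: real and g r :: "real\<Rightarrow>real"
  assumes idS: "id \<in> S" and d1: "d \<ge> 1" and Sinto: "\<forall>f\<in>S. \<forall>x\<in>{0..<1}. f x \<in> {0..<1}"
    and gS: "g\<in>S" and rS: "r\<in>S" and gpre: "{x. g x \<in> {0..<b}} = {0..<a}" and b0: "0<b" and ab: "2*b \<le> a"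
    and rpre: "\<And>k::nat. real (k+2) * b \<le> 1 \<Longrightarrow> {x. r x \<in> {real(k+1)*b..<real(k+2)*b}} = {real k*b..<real (k+1)*b}"
    and Nb: "real N * b = 1" and N2: "2 \<le> N"
  shows "\<not> co_amenable (comp_grp S) (fix_init d S)"
proof
  let ?H = "fix_init d S"
  let ?X = "lcosets\<^bsub>comp_grp S\<^esub> ?H"
  assume "co_amenable (comp_grp S) ?H"
  then obtain m where m: "mean_on ?X m" and inv: "\<forall>g\<in>carrier (comp_grp S). \<forall>\<phi>. bounded (\<phi> ` ?X) \<longrightarrow>
         m (\<lambda>C. \<phi> (g <#\<^bsub>comp_grp S\<^esub> C)) = m \<phi>"
    unfolding co_amenable_def by blast
  have idH: "id \<in> ?H" using idS unfolding fix_init_def by auto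
  have H0: "\<forall>h\<in>?H. h 0 = 0" using d1 unfolding fix_init_def by auto
  have Xe: "ev C \<in> {0..<1}" if "C \<in> ?X" for C
    using that Sinto ev_coset[OF idH H0] unfolding lcosets_comp by auto
  have Xg: "ev (f <#\<^bsub>comp_grp S\<^esub> C) = f (ev C)" if C: "C \<in> ?X" for C f
  proof -
    obtain k where k: "k \<in> S" "C = (\<lambda>h. k \<circ> h) ` ?H" using C unfolding lcosets_comp by blast
    have "f <#\<^bsub>comp_grp S\<^esub> C = (\<lambda>h. (f \<circ> k) \<circ> h) ` ?H"
      unfolding lcoset_comp k(2) by (auto simp: image_image comp_assoc)
    then show ?thesis using ev_coset[OF idH H0] k by simp
  qed
  define \<nu> where "\<nu> B = m (\<lambda>C. indicator B (ev C))" for B :: "real set"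
  have ind_b: "\<forall>C\<in>?X. \<bar>indicator B (ev C) :: real\<bar> \<le> 1" for B
    by (auto simp: indicator_def)
  have bdd: "bounded ((\<lambda>C. indicator B (ev C) :: real) ` ?X)" for B
    using ind_b[of B] unfolding bounded_iff by auto
  have nu0: "0 \<le> \<nu> B" for B
    using m bdd[of B] unfolding mean_on_def \<nu>_def by auto
  have nuadd: "\<nu> (A \<union> B) = \<nu> A + \<nu> B" if "A \<inter> B = {}" for A B
  proof -
    have "m (\<lambda>C. 1 * indicator A (ev C) + 1 * indicator B (ev C)) = 1 * \<nu> A + 1 * \<nu> B"
      using m bdd[of A] bdd[of B] unfolding mean_on_def \<nu>_def by blast
    moreover have "\<nu> (A \<union> B) = m (\<lambda>C. 1 * indicator A (ev C) + 1 * indicator B (ev C))"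
      unfolding \<nu>_def
      apply (rule mean_cong[OF m, where K=2])
      using that by (auto simp: indicator_def)
    ultimately show ?thesis by simp
  qed
  have numono: "\<nu> A \<le> \<nu> B" if "A \<subseteq> B" for A B
  proof -
    have "B = A \<union> (B - A)" using that by auto
    then have "\<nu> B = \<nu> A + \<nu> (B - A)" using nuadd[of A "B - A"] by auto
    then show ?thesis using nu0[of "B - A"] by simp
  qed
  have nutot: "\<nu> {0..<1} = 1"
  proof -
    have "\<nu> {0..<1} = m (\<lambda>_. 1)" unfolding \<nu>_def
      apply (rule mean_cong[OF m, where K=1]) apply (simp_all add: indicator_def)
      by (meson Xe atLeastLessThan_iff)
    then show ?thesis using m unfolding mean_on_def by simp
  qed
  have nuinv: "\<nu> {x. f x \<in> B} = \<nu> B" if "f \<in> S" for f B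
  proof -
    have "m (\<lambda>C. indicator B (ev (f <#\<^bsub>comp_grp S\<^esub> C))) = \<nu> B"
      using inv that bdd[of B] unfolding \<nu>_def by (auto simp: comp_grp_def)
    moreover have "m (\<lambda>C. indicator B (ev (f <#\<^bsub>comp_grp S\<^esub> C))) = \<nu> {x. f x \<in> B}"
      unfolding \<nu>_def
      by (rule mean_cong[OF m, where K=1]) (auto simp: indicator_def Xg)
    ultimately show ?thesis by simp
  qed
  define P where "P k = {real k * b..<real (k+1) * b}" for k :: nat
  have "\<nu> {0..<a} = \<nu> {0..<b}" using nuinv[OF gS, of "{0..<b}"] gpre by simp
  moreover have "{0..<a} = {0..<b} \<union> {b..<a}" using b0 ab by auto
  moreover have "{0..<b} \<inter> {b..<a} = {}" by auto
  ultimately have "\<nu> {b..<a} = 0" using nuadd by (metis add_cancel_left_right)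
  moreover have "P 1 \<subseteq> {b..<a}" using ab unfolding P_def by auto
  ultimately have P1: "\<nu> (P 1) = 0" using numono nu0 by (metis order_antisym)
  have Pstep: "\<nu> (P k) = \<nu> (P (k+1))" if "k + 2 \<le> N" for k
  proof -
    have "real (k+2) * b \<le> real N * b" using that b0 by (intro mult_right_mono) auto
    then have "real (k+2) * b \<le> 1" using Nb by simp
    from rpre[OF this] have "{x. r x \<in> P (k+1)} = P k" unfolding P_def
      by (simp add: add.commute add.left_commute)
    then show ?thesis using nuinv[OF rS, of "P (k+1)"] by simp
  qed
  have Pk: "\<nu> (P k) = 0" if "k < N" for k
  proof (cases k)
    case 0 then show ?thesis using Pstep[of 0] N2 P1 by simp
  next
    case (Suc j)
    have "\<forall>j. Suc j < N \<longrightarrow> \<nu> (P (Suc j)) = 0"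
    proof
      fix j show "Suc j < N \<longrightarrow> \<nu> (P (Suc j)) = 0"
      proof (induction j)
        case 0 then show ?case using P1 by simp
      next
        case (Suc j)
        show ?case
        proof
          assume "Suc (Suc j) < N"
          then have "\<nu> (P (Suc j)) = \<nu> (P (Suc j + 1))" by (intro Pstep) simp
          then show "\<nu> (P (Suc (Suc j))) = 0" using Suc \<open>Suc (Suc j) < N\<close> by simp
        qed
      qed
    qed
    then show ?thesis using Suc that by auto
  qed
  have Pu: "\<nu> {0..<real k * b} = 0" if "k \<le> N" for k
    using that
  proof (induction k)
    case 0 then show ?case using nuadd[of "{}" "{}"] by simp
  next
    case (Suc k)
    have "{0..<real (Suc k) * b} = {0..<real k * b} \<union> P k" using b0 unfolding P_def
      by (auto simp: algebra_simps) (smt (verit) b0 mult_nonneg_nonneg of_nat_0_le_iff)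
    moreover have "{0..<real k * b} \<inter> P k = {}" unfolding P_def by auto
    ultimately show ?case using nuadd Suc Pk[of k] by simp
  qed
  from Pu[of N] Nb nutot show False by simp
qed



definition pc :: "real \<Rightarrow> complex" where "pc t = cis (2 * pi * t)"

lemma pc_inj: "inj_on pc {0..<1}"
proof
  fix s t :: real assume s: "s \<in> {0..<1}" and t: "t \<in> {0..<1}" and e: "pc s = pc t"
  then have "exp (\<i> * complex_of_real (2 * pi * s)) = exp (\<i> * complex_of_real (2 * pi * t))"
    by (simp add: pc_def cis_conv_exp)
  then obtain n :: int where n: "\<i> * complex_of_real (2 * pi * s) = \<i> * complex_of_real (2 * pi * t) + (of_int (2 * n) * pi) * \<i>"
    unfolding exp_eq by blast
  then have "Im (\<i> * complex_of_real (2 * pi * s)) = Im (\<i> * complex_of_real (2 * pi * t) + (of_int (2 * n) * pi) * \<i>)"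
    by simp
  then have "2 * pi * s = 2 * pi * t + 2 * n * pi" by simp
  then have "pi * (2 * s) = pi * (2 * (t + n))" by (simp add: algebra_simps)
  then have "s = t + n" by simp
  with s t have "n = 0" by auto
  then show "s = t" using \<open>s = t + n\<close> by simp
qed

lemma pc_surj: "pc ` {0..<1} = sphere 0 1"
proof
  show "pc ` {0..<1} \<subseteq> sphere 0 1" by (auto simp: pc_def)
  show "sphere 0 1 \<subseteq> pc ` {0..<1}"
  proof
    fix z :: complex assume z: "z \<in> sphere 0 1"
    then have z0: "z \<noteq> 0" and zs: "sgn z = z" by (auto simp: sgn_div_norm)
    have A: "- pi < Arg z" "Arg z \<le> pi" using Arg_bounded by auto
    show "z \<in> pc ` {0..<1}"
    proof (cases "0 \<le> Arg z")
      case True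
      have "pc (Arg z / (2*pi)) = z" using cis_Arg[OF z0] zs by (simp add: pc_def)
      moreover have "Arg z / (2*pi) \<in> {0..<1}" using True A by auto
      ultimately show ?thesis by (metis image_eqI)
    next
      case False
      have "pc (Arg z / (2*pi) + 1) = cis (Arg z + 2 * pi)" by (simp add: pc_def algebra_simps)
      also have "\<dots> = cis (Arg z)" by (simp add: cis_mult[symmetric])
      finally have "pc (Arg z / (2*pi) + 1) = z" using cis_Arg[OF z0] zs by simp
      moreover have "Arg z / (2*pi) + 1 \<in> {0..<1}" using False A by (auto simp: field_simps)
      ultimately show ?thesis by (metis image_eqI)
    qed
  qed
qed

lemma circ_homeo:
  fixes f :: "real \<Rightarrow> real"
  assumes cf: "continuous_on {0..1} f" and f0: "f 0 = 0" and f1: "f 1 = 1"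
    and bij: "bij_betw f {0..<1} {0..<1}"
  shows "\<exists>\<phi> \<psi>. homeomorphism (sphere (0::complex) 1) (sphere 0 1) \<phi> \<psi> \<and>
       (\<forall>t\<in>{0..<1}. \<phi> (cis (2 * pi * t)) = cis (2 * pi * f t))"
proof -
  define \<phi> where "\<phi> z = pc (f (inv_into {0..<1} pc z))" for z
  have phit: "\<phi> (pc t) = pc (f t)" if "t \<in> {0..<1}" for t
    using that pc_inj unfolding \<phi>_def by (simp add: inv_into_f_f)
  have pc1: "pc 1 = pc 0" by (simp add: pc_def)
  have phit2: "\<phi> (pc t) = pc (f t)" if "t \<in> {0..1}" for t
  proof (cases "t = 1")
    case True then show ?thesis using phit[of 0] pc1 f0 f1 by simp
  next
    case False then show ?thesis using that phit by auto
  qed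
  have pcc: "continuous_on UNIV pc" unfolding pc_def by (intro continuous_intros)
  have pimg: "pc ` {0..1} = sphere 0 1"
  proof -
    have "pc ` {0..1} = pc ` {0..<1} \<union> {pc 1}" by (auto simp: image_iff) (metis atLeastAtMost_iff atLeastLessThan_iff less_eq_real_def)
    also have "\<dots> = sphere 0 1" using pc_surj pc1 by auto
    finally show ?thesis .
  qed
  have q: "quotient_map (top_of_set {0..1}) (top_of_set (sphere 0 1)) pc"
    apply (rule continuous_imp_quotient_map)
    subgoal using pimg continuous_on_subset[OF pcc] by (auto simp: continuous_map_in_subtopology)
    subgoal by (simp add: compact_space_subtopology)
    subgoal by (simp add: Hausdorff_space_subtopology)
    subgoal using pimg by simp
    done
  have "continuous_on {0..1} (\<phi> \<circ> pc)"
  proof -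
    have "continuous_on {0..1} (pc \<circ> f)" using cf pcc by (intro continuous_on_compose) (auto intro: continuous_on_subset)
    then show ?thesis by (rule continuous_on_cong[THEN iffD1, rotated -1]) (auto simp: phit2)
  qed
  then have "continuous_map (top_of_set {0..1}) euclidean (\<phi> \<circ> pc)" by simp
  from continuous_compose_quotient_map[OF q this] have cphi: "continuous_on (sphere 0 1) \<phi>" by simp
  have fim: "f ` {0..<1} = {0..<1}" using bij by (simp add: bij_betw_def)
  have "\<phi> ` sphere 0 1 = sphere 0 1"
  proof -
    have "\<phi> ` sphere 0 1 = \<phi> ` pc ` {0..<1}" using pc_surj by simp
    also have "\<dots> = (\<lambda>t. pc (f t)) ` {0..<1}" unfolding image_image by (rule image_cong) (simp_all add: phit)
    also have "\<dots> = pc ` f ` {0..<1}" by (simp add: image_image)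
    also have "\<dots> = sphere 0 1" using fim pc_surj by simp
    finally show ?thesis .
  qed
  moreover have "inj_on \<phi> (sphere 0 1)"
  proof
    fix z w assume z: "z \<in> sphere (0::complex) 1" and w: "w \<in> sphere (0::complex) 1" and e: "\<phi> z = \<phi> w"
    obtain s where s: "s \<in> {0..<1}" "z = pc s" using z pc_surj by blast
    obtain t where t: "t \<in> {0..<1}" "w = pc t" using w pc_surj by blast
    have "pc (f s) = pc (f t)" using e s t phit by simp
    moreover have "f s \<in> {0..<1}" "f t \<in> {0..<1}" using s t fim by auto
    ultimately have "f s = f t" using pc_inj by (meson inj_onD)
    then have "s = t" using bij s t by (auto simp: bij_betw_def inj_on_def)
    then show "z = w" using s t by simp
  qed
  ultimately obtain \<psi> where "homeomorphism (sphere (0::complex) 1) (sphere 0 1) \<phi> \<psi>"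
    using homeomorphism_compact[OF compact_sphere cphi] by blast
  moreover have "\<forall>t\<in>{0..<1}. \<phi> (cis (2 * pi * t)) = cis (2 * pi * f t)"
    using phit unfolding pc_def by simp
  ultimately show ?thesis by blast
qed



definition gg :: "real \<Rightarrow> real \<Rightarrow> real \<Rightarrow> real \<Rightarrow> real" where
  "gg D a b x = min x (max (x/D) (max (x - a + b) (D*x - 2*D*a + 2*a)))"

locale GG =
  fixes D a b :: real
  assumes D2: "2 \<le> D" and b0: "0 < b" and Db: "D * b = a" and a1: "2*a < 1"
begin

lemma a0: "0 < a" using D2 b0 Db by (metis mult_pos_pos less_le_trans zero_less_numeral)
lemma ba: "2 * b \<le> a" using D2 b0 Db by (metis mult_right_mono less_imp_le)

lemma dv1: "y \<le> x/D \<longleftrightarrow> D*y \<le> x" using D2 by (auto simp: le_divide_eq mult.commute)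
lemma dv2: "x/D \<le> y \<longleftrightarrow> x \<le> D*y" using D2 by (auto simp: divide_le_eq mult.commute)
lemma Da: "2*a \<le> D*a" using D2 a0 by (intro mult_right_mono) auto
lemma e1: "D*(x - a + b) = D*x - D*a + a" using Db by (simp add: right_diff_distrib distrib_left)

lemma g1: assumes "0 \<le> x" "x \<le> a" shows "gg D a b x = x/D"
proof -
  have "(D-1)*x \<le> (D-1)*a" using assms D2 by (intro mult_left_mono) auto
  then have E1: "D*x - x \<le> D*a - a" by (simp add: algebra_simps)
  have E2: "D*x \<le> D*a" using assms D2 by (intro mult_left_mono) auto
  have F1: "x/D \<le> x" unfolding dv2 using assms D2 mult_left_mono[of 1 D x] by (simp add: mult.commute)
  have F2: "x - a + b \<le> x/D" unfolding dv1 e1 using E1 by linarith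
  have F3: "D*x - 2*D*a + 2*a \<le> x/D" unfolding dv1
  proof -
    have "D*x - 2*D*a + 2*a \<le> 0" using E2 Da by linarith
    moreover have "0 \<le> x" using assms by simp
    moreover have "0 \<le> x/D" using assms D2 by simp
    ultimately have "D*x - 2*D*a + 2*a \<le> x/D" by linarith
    then show "D*(D*x - 2*D*a + 2*a) \<le> x" unfolding dv1 .
  qed
  show ?thesis unfolding gg_def using F1 F2 F3 by (simp add: max_def min_def)
qed

lemma g2: assumes "a \<le> x" "x \<le> 2*a - b" shows "gg D a b x = x - a + b"
proof -
  have "(D-1)*a \<le> (D-1)*x" using assms D2 by (intro mult_left_mono) auto
  then have E1: "D*a - a \<le> D*x - x" by (simp add: algebra_simps)
  have "(D-1)*x \<le> (D-1)*(2*a - b)" using assms D2 by (intro mult_left_mono) auto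
  then have E2: "D*x - x \<le> 2*(D*a) - D*b - 2*a + b" by (simp add: algebra_simps)
  have F1: "x/D \<le> x - a + b" unfolding dv2 e1 using E1 by linarith
  have F2: "D*x - 2*D*a + 2*a \<le> x - a + b" using E2 Db by linarith
  have F3: "x - a + b \<le> x" using ba b0 by linarith
  show ?thesis unfolding gg_def using F1 F2 F3 by (simp add: max_def min_def)
qed

lemma g3: assumes "2*a - b \<le> x" "x \<le> 2*a" shows "gg D a b x = D*x - 2*D*a + 2*a"
proof -
  have "(D-1)*(2*a-b) \<le> (D-1)*x" using assms D2 by (intro mult_left_mono) auto
  then have E1: "2*(D*a) - D*b - 2*a + b \<le> D*x - x" by (simp add: algebra_simps)
  have "(D-1)*x \<le> (D-1)*(2*a)" using assms D2 by (intro mult_left_mono) auto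
  then have E2: "D*x - x \<le> 2*(D*a) - 2*a" by (simp add: algebra_simps)
  have F2: "x - a + b \<le> D*x - 2*D*a + 2*a" using E1 Db by linarith
  have F1: "x/D \<le> x - a + b" unfolding dv2 e1
  proof -
    have "(D-1)*a \<le> (D-1)*x" using assms D2 ba b0 by (intro mult_left_mono) auto
    then show "x \<le> D*x - D*a + a" by (simp add: algebra_simps)
  qed
  have F3: "D*x - 2*D*a + 2*a \<le> x" using E2 by linarith
  show ?thesis unfolding gg_def using F1 F2 F3 by (simp add: max_def min_def)
qed

lemma g4: assumes "2*a \<le> x" shows "gg D a b x = x"
proof -
  have "(D-1)*(2*a) \<le> (D-1)*x" using assms D2 by (intro mult_left_mono) auto
  then have E: "2*(D*a) - 2*a \<le> D*x - x" by (simp add: algebra_simps)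
  have "x \<le> D*x - 2*D*a + 2*a" using E by linarith
  then show ?thesis unfolding gg_def by (simp add: max_def min_def)
qed

lemma g0: assumes "x \<le> 0" shows "gg D a b x = x"
proof -
  have "x \<le> x/D" unfolding dv1 using mult_left_mono_neg[of 1 D x] assms D2 by (simp add: mult.commute)
  then show ?thesis unfolding gg_def by (simp add: max_def min_def)
qed

lemma gmono: assumes "x < y" shows "gg D a b x < gg D a b y"
proof -
  have "x/D < y/D" using assms D2 by (simp add: divide_strict_right_mono)
  moreover have "D*x < D*y" using assms D2 by simp
  ultimately show ?thesis unfolding gg_def using assms by linarith
qed

lemma gcont: "continuous_on A (gg D a b)"
  unfolding gg_def using D2 by (intro continuous_intros) auto

lemma gbij: "bij_betw (gg D a b) {0..<1} {0..<1}"
proof -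
  have gz: "gg D a b 0 = 0" using g0 by simp
  have go: "gg D a b 1 = 1" using g4 a1 by simp
  have inj: "inj_on (gg D a b) {0..<1}"
    by (metis gmono linorder_inj_onI' order_less_irrefl)
  have "gg D a b ` {0..<1} = {0..<1}"
  proof
    show "gg D a b ` {0..<1} \<subseteq> {0..<1}"
    proof
      fix y assume "y \<in> gg D a b ` {0..<1}"
      then obtain x where x: "0 \<le> x" "x < 1" "y = gg D a b x" by auto
      have "gg D a b 0 \<le> gg D a b x" using x gmono by (cases "x = 0") (auto intro: less_imp_le)
      moreover have "gg D a b x < gg D a b 1" using x gmono by auto
      ultimately show "y \<in> {0..<1}" using gz go x by auto
    qed
    show "{0..<1} \<subseteq> gg D a b ` {0..<1}"
    proof
      fix y :: real assume y: "y \<in> {0..<1}"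
      obtain x where x: "0 \<le> x" "x \<le> 1" "gg D a b x = y"
        using IVT'[of "gg D a b" 0 y 1] y gz go gcont by auto
      have "x \<noteq> 1" using x go y by auto
      then show "y \<in> gg D a b ` {0..<1}" using x by force
    qed
  qed
  then show ?thesis using inj by (simp add: bij_betw_def)
qed

lemma gpre: "{x. gg D a b x \<in> {0..<b}} = {0..<a}"
proof (intro subset_antisym subsetI)
  fix x assume "x \<in> {0..<a}"
  then have "gg D a b x = x/D" "0 \<le> x" "x < a" using g1 by auto
  moreover have "x/D < b" using \<open>x < a\<close> D2 Db by (simp add: divide_less_eq mult.commute)
  ultimately show "x \<in> {x. gg D a b x \<in> {0..<b}}" using D2 by simp
next
  fix x assume x: "x \<in> {x. gg D a b x \<in> {0..<b}}"
  show "x \<in> {0..<a}"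
  proof (rule ccontr)
    assume "x \<notin> {0..<a}"
    then consider "x < 0" | "a \<le> x" by force
    then show False
    proof cases
      case 1 then show False using x g0 by auto
    next
      case 2
      have "b \<le> a" using ba b0 by linarith
      then have "gg D a b a = b" using g2[of a] by simp
      then have "b \<le> gg D a b x" using gmono[of a x] 2 by (cases "x = a") auto
      then show False using x by simp
    qed
  qed
qed

end



definition rr :: "real \<Rightarrow> real \<Rightarrow> real" where
  "rr c x = (if 0 \<le> x \<and> x < 1 - c then x + c else if 1 - c \<le> x \<and> x < 1 then x + c - 1 else x)"

lemma dadic01: "dadic d 0" "dadic d 1"
  unfolding dadic_def by (rule exI[of _ 0], rule exI[of _ 0], simp) (rule exI[of _ 1], rule exI[of _ 0], simp)

lemma id_T: "id \<in> HT_T d"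
proof -
  have ex: "\<exists>(n::nat) (p::nat \<Rightarrow> real). p 0 = 0 \<and> p n = 1 \<and>
        (\<forall>i\<le>n. dadic d (p i)) \<and>
        (\<forall>i<n. p i < p (Suc i) \<and>
           (\<exists>(k::int) (b::real). \<forall>t\<in>{p i..<p (Suc i)}. id t = real d powi k * t + b))"
    apply (rule exI[of _ 1], rule exI[of _ "\<lambda>i. if i = 0 then 0 else 1"])
    using dadic01 by (auto intro!: exI[of _ 0])
  have "id \<in> HT_V d" unfolding HT_V_def using ex by auto
  moreover have "homeomorphism (sphere (0::complex) 1) (sphere 0 1) id id" by (rule homeomorphismI) auto
  ultimately show ?thesis unfolding HT_T_def by force
qed

context
  fixes d :: nat
  assumes d2: "2 \<le> d"
begin

definition "DD = real d"
definition "aa = 1 / DD ^ 3"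
definition "bb = 1 / DD ^ 4"

lemma DD2: "2 \<le> DD" using d2 unfolding DD_def by simp

lemma GGi: "GG DD aa bb"
proof
  show "2 \<le> DD" by (rule DD2)
  show "0 < bb" using DD2 unfolding bb_def by simp
  have "DD^4 = DD * DD^3" by (simp add: eval_nat_numeral)
  then show "DD * bb = aa" using DD2 unfolding bb_def aa_def by (simp add: field_simps)
  have "(2::real)^3 \<le> DD^3" using DD2 by (intro power_mono) auto
  then show "2 * aa < 1" using DD2 unfolding aa_def by (simp add: field_simps)
qed

interpretation G: GG DD aa bb by (rule GGi)

lemma dad: "dadic d (of_int z / DD ^ n)" unfolding dadic_def DD_def by blast

definition "pp i = (if i = 0 then 0 else if i = 1 then aa else if i = 2 then 2*aa - bb else if i = 3 then 2*aa else (1::real))"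

lemma pp_piece: assumes "i < 4"
  shows "pp i < pp (Suc i) \<and> (\<exists>(k::int) (b::real). \<forall>t\<in>{pp i..<pp (Suc i)}. gg DD aa bb t = real d powi k * t + b)"
proof -
  have ab: "bb < aa" using G.ba G.b0 by linarith
  consider "i = 0" | "i = 1" | "i = 2" | "i = 3" using assms by linarith
  then show ?thesis
  proof cases
    case 1
    have "\<forall>t\<in>{0..<aa}. gg DD aa bb t = real d powi (-1) * t + 0"
      using G.g1 by (auto simp: power_int_minus DD_def divide_inverse mult.commute)
    moreover have "pp i = 0" "pp (Suc i) = aa" using 1 unfolding pp_def by auto
    ultimately show ?thesis using G.a0 by metis
  next
    case 2
    have "\<forall>t\<in>{aa..<2*aa-bb}. gg DD aa bb t = real d powi 0 * t + (bb - aa)"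
      using G.g2 by auto
    moreover have "pp i = aa" "pp (Suc i) = 2*aa-bb" using 2 unfolding pp_def by auto
    moreover have "aa < 2*aa-bb" using ab by linarith
    ultimately show ?thesis by metis
  next
    case 3
    have "\<forall>t\<in>{2*aa-bb..<2*aa}. gg DD aa bb t = real d powi 1 * t + (2*aa - 2*DD*aa)"
      using G.g3 by (auto simp: DD_def)
    moreover have "pp i = 2*aa-bb" "pp (Suc i) = 2*aa" using 3 unfolding pp_def by auto
    moreover have "2*aa-bb < 2*aa" using G.b0 by linarith
    ultimately show ?thesis by metis
  next
    case 4
    have "\<forall>t\<in>{2*aa..<1}. gg DD aa bb t = real d powi 0 * t + 0"
      using G.g4 by auto
    moreover have "pp i = 2*aa" "pp (Suc i) = 1" using 4 unfolding pp_def by auto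
    ultimately show ?thesis using G.a1 by metis
  qed
qed

lemma g_V: "gg DD aa bb \<in> HT_V d"
  unfolding HT_V_def
proof (intro CollectI conjI exI[of _ "4::nat"] exI[of _ pp])
  show "bij_betw (gg DD aa bb) {0..<1} {0..<1}" by (rule G.gbij)
  show "\<forall>x. x \<notin> {0..<1} \<longrightarrow> gg DD aa bb x = x"
    using G.g0 G.g4 G.a1 by (auto simp: not_le)
  have dadics: "dadic d 0" "dadic d aa" "dadic d (2*aa - bb)" "dadic d (2*aa)" "dadic d 1"
  proof -
    show "dadic d 0" using dad[of 0 0] by simp
    show "dadic d aa" using dad[of 1 3] unfolding aa_def by simp
    show "dadic d (2*aa)" using dad[of 2 3] unfolding aa_def by simp
    show "dadic d 1" using dad[of 1 0] by simp
    have e4: "DD^4 = DD * DD^3" by (simp add: eval_nat_numeral)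
    have "2*aa - bb = (2 * DD - 1) / DD ^ 4" unfolding aa_def bb_def e4 using DD2
      by (simp add: field_simps)
    also have "\<dots> = of_int (2 * int d - 1) / DD ^ 4" by (simp add: DD_def)
    finally have "2*aa - bb = of_int (2 * int d - 1) / DD ^ 4" .
    then show "dadic d (2*aa - bb)" using dad[of "2 * int d - 1" 4] by metis
  qed
  show "\<forall>i\<le>4. dadic d (pp i)"
    using dadics unfolding pp_def by auto
  show "\<forall>i<4. pp i < pp (Suc i) \<and> (\<exists>(k::int) (b::real). \<forall>t\<in>{pp i..<pp (Suc i)}. gg DD aa bb t = real d powi k * t + b)"
    using pp_piece by blast
qed (simp_all add: pp_def)

lemma g_T: "gg DD aa bb \<in> HT_T d"
proof -
  have "gg DD aa bb 0 = 0" using G.g0 by simp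
  moreover have "gg DD aa bb 1 = 1" using G.g4 G.a1 by simp
  ultimately show ?thesis using circ_homeo[OF G.gcont _ _ G.gbij] g_V unfolding HT_T_def by blast
qed

lemma bb01: "0 < bb" "bb < 1" using G.b0 G.ba G.a1 by linarith+

lemma r_V: "rr bb \<in> HT_V d"
  unfolding HT_V_def
proof (intro CollectI conjI exI[of _ "2::nat"] exI[of _ "\<lambda>i::nat. if i = 0 then 0 else if i = 1 then 1 - bb else (1::real)"])
  let ?ri = "\<lambda>y::real. if 0 \<le> y \<and> y < bb then y + 1 - bb else if bb \<le> y \<and> y < 1 then y - bb else y"
  show "bij_betw (rr bb) {0..<1} {0..<1}"
    using bb01 by (intro bij_betw_byWitness[where f' = ?ri]) (auto simp: rr_def image_subset_iff)
  show "\<forall>x. x \<notin> {0..<1} \<longrightarrow> rr bb x = x" using bb01 by (auto simp: rr_def)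
  have "1 - bb = (DD^4 - 1) / DD^4" unfolding bb_def using DD2 by (simp add: field_simps)
  also have "\<dots> = of_int (int d ^ 4 - 1) / DD^4" by (simp add: DD_def)
  finally have "dadic d (1 - bb)" using dad[of "int d ^ 4 - 1" 4] by metis
  then show "\<forall>i::nat\<le>2. dadic d (if i = 0 then 0 else if i = 1 then 1 - bb else 1)"
    using dadic01 by auto
  show "\<forall>i::nat<2. (if i = 0 then 0 else if i = 1 then 1 - bb else 1) < (if Suc i = 0 then 0 else if Suc i = 1 then 1 - bb else (1::real)) \<and>
     (\<exists>(k::int) (b::real). \<forall>t\<in>{(if i = 0 then 0 else if i = 1 then 1 - bb else 1)..<(if Suc i = 0 then 0 else if Suc i = 1 then 1 - bb else (1::real))}.
        rr bb t = real d powi k * t + b)"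
  proof (intro allI impI)
    fix i :: nat assume "i < 2"
    then consider "i = 0" | "i = 1" by linarith
    then show "(if i = 0 then 0 else if i = 1 then 1 - bb else 1) < (if Suc i = 0 then 0 else if Suc i = 1 then 1 - bb else (1::real)) \<and>
     (\<exists>(k::int) (b::real). \<forall>t\<in>{(if i = 0 then 0 else if i = 1 then 1 - bb else 1)..<(if Suc i = 0 then 0 else if Suc i = 1 then 1 - bb else (1::real))}.
        rr bb t = real d powi k * t + b)"
    proof cases
      case 1
      have "\<forall>t\<in>{0..<1-bb}. rr bb t = real d powi 0 * t + bb" by (auto simp: rr_def)
      moreover have "0 < 1 - bb" using bb01 by linarith
      moreover have e: "(if i = 0 then 0 else if i = 1 then 1 - bb else 1) = (0::real)"
        "(if Suc i = 0 then 0 else if Suc i = 1 then 1 - bb else (1::real)) = 1 - bb" using 1 by simp_all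
      ultimately show ?thesis unfolding e by blast
    next
      case 2
      have "\<forall>t\<in>{1-bb..<1}. rr bb t = real d powi 0 * t + (bb - 1)" by (auto simp: rr_def)
      moreover have "1 - bb < 1" using bb01 by linarith
      moreover have e: "(if i = 0 then 0 else if i = 1 then 1 - bb else 1) = 1 - bb"
        "(if Suc i = 0 then 0 else if Suc i = 1 then 1 - bb else (1::real)) = 1" using 2 by simp_all
      ultimately show ?thesis unfolding e by blast
    qed
  qed
qed simp_all

lemma r_T: "rr bb \<in> HT_T d"
proof -
  let ?c = "cis (2 * pi * bb)"
  have "homeomorphism (sphere (0::complex) 1) (sphere 0 1) (\<lambda>z. ?c * z) (\<lambda>z. cis (- (2 * pi * bb)) * z)"
    by (rule homeomorphismI) (auto intro!: continuous_intros simp: norm_mult cis_mult)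
  moreover have "\<forall>t\<in>{0..<1}. ?c * cis (2 * pi * t) = cis (2 * pi * rr bb t)"
  proof
    fix t :: real assume t: "t \<in> {0..<1}"
    have e: "?c * cis (2 * pi * t) = cis (2 * pi * (t + bb))" by (simp add: cis_mult algebra_simps)
    show "?c * cis (2 * pi * t) = cis (2 * pi * rr bb t)"
    proof (cases "t < 1 - bb")
      case True then show ?thesis using t e by (simp add: rr_def)
    next
      case False
      have "cis (2 * pi * (t + bb - 1)) = cis (2 * pi * (t + bb)) * cis (- (2 * pi))"
        by (simp add: cis_mult algebra_simps)
      also have "\<dots> = cis (2 * pi * (t + bb))"
      proof -
        have "cis (2 * pi * of_int (-1)) = 1" by (rule cis_multiple_2pi) simp
        then show ?thesis by simp
      qed
      finally show ?thesis using t e False by (simp add: rr_def)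
    qed
  qed
  ultimately show ?thesis using r_V unfolding HT_T_def by blast
qed

lemma rpre_aux: "0 \<le> K \<Longrightarrow> 0 < c \<Longrightarrow> c < 1 \<Longrightarrow> K + 2*c \<le> 1 \<Longrightarrow>
  (rr c x \<in> {K + c..<K + 2*c} \<longleftrightarrow> x \<in> {K..<K + c})"
  by (auto simp: rr_def)

lemma rpre: "real (k+2) * bb \<le> 1 \<Longrightarrow>
   {x. rr bb x \<in> {real (k+1) * bb..<real (k+2) * bb}} = {real k * bb..<real (k+1) * bb}"
proof -
  assume h: "real (k+2) * bb \<le> 1"
  have e1: "real (k+1) * bb = real k * bb + bb" "real (k+2) * bb = real k * bb + 2 * bb"
    by (simp_all add: algebra_simps)
  have k0: "0 \<le> real k * bb" using bb01 by simp
  have h': "real k * bb + 2 * bb \<le> 1" using h unfolding e1 .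
  have "rr bb x \<in> {real k * bb + bb..<real k * bb + 2 * bb} \<longleftrightarrow> x \<in> {real k * bb..<real k * bb + bb}" for x
    using rpre_aux[OF k0 bb01 h'] .
  then show ?thesis unfolding e1 by blast
qed

lemma N4: "real (d^4) * bb = 1" unfolding bb_def DD_def using d2 by simp

lemma N2: "2 \<le> d^4"
proof -
  have "d \<le> d^4" using d2 by (simp add: self_le_power)
  then show ?thesis using d2 by linarith
qed

lemma V_into: "\<forall>f\<in>HT_V d. \<forall>x\<in>{0..<1}. f x \<in> {0..<1}"
  unfolding HT_V_def by (auto dest: bij_betwE)

lemma T_into: "\<forall>f\<in>HT_T d. \<forall>x\<in>{0..<1}. f x \<in> {0..<1}"
  using V_into unfolding HT_T_def by blast

lemma lemma_main: "\<not> co_amenable (comp_grp (HT_V d)) (fix_init d (HT_V d)) \<and>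
         \<not> co_amenable (comp_grp (HT_T d)) (fix_init d (HT_T d))"
proof
  have idV: "id \<in> HT_V d" using id_T unfolding HT_T_def by blast
  show "\<not> co_amenable (comp_grp (HT_V d)) (fix_init d (HT_V d))"
    by (rule not_coam[OF idV _ V_into g_V r_V G.gpre G.b0 G.ba rpre N4 N2]) (use d2 in simp)
  show "\<not> co_amenable (comp_grp (HT_T d)) (fix_init d (HT_T d))"
    by (rule not_coam[OF id_T _ T_into g_T r_T G.gpre G.b0 G.ba rpre N4 N2]) (use d2 in simp)
qed

end


theorem lemma5p6:
  fixes d :: nat
  assumes "d \<ge> 2"
  shows "\<not> co_amenable (comp_grp (HT_V d)) (fix_init d (HT_V d)) \<and>
         \<not> co_amenable (comp_grp (HT_T d)) (fix_init d (HT_T d))"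
  using lemma_main[OF assms] .

end
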